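(* Let $\mathcal{C}=\{C_1,\ldots,C_r\}$ be a partition of $C=[n]$. Suppose $q$ and all $q^{C_j}$ are symmetric, i.e. $q(A)=1/\binom{n}{|A|}$ and $q^{C_j}(A_j)=1/\binom{n_j}{|A_j|}$. Consider a system consisting of $r$ modules $(C_j,\chi_j)$ (each $\chi_j$ semicoherent) connected in series, i.e. $\phi(\mathbf{x})=\prod_{j=1}^r\chi_j(\mathbf{x}^{C_j})$. Then for every $0\le k\le n$, $$\overline{P}_{n-k}=\sum_{\substack{0\le a_j\le n_j\\ a_1+\cdots+a_r=k}}\frac{\binom{n_1}{a_1}\cdots\binom{n_r}{a_r}}{\binom{n}{k}}\prod_{j=1}^r\overline{P}_{j,n_j-a_j}.$$
   Context: Consider components $C=[n]$ with random lifetimes $T_1,\ldots,T_n$ whose joint distribution has no ties. Subsets are identified with Boolean vectors. A structure is semicoherent if it is nondecreasing in each variable, maps $\mathbf{0}$ to $0$ and $\mathbf{1}$ to $1$. The relative quality function is $q(A)=\Pr(\max_{i\notin A}T_i<\min_{i\in A}T_i)$, with $q(\varnothing)=q([n])=1$. For a partition into nonempty blocks $C_j$, write $n_j=|C_j|$, $A_j=A\cap C_j$, $\mathbf{x}^{C_j}=(x_i)_{i\in C_j}$, and $q^{C_j}(A)=\Pr(\max_{i\in C_j\setminus A}T_i<\min_{i\in A}T_i)$ for $A\subseteq C_j$. The tail probability signatures are $\overline{P}_k=\sum_{|A|=n-k}q(A)\phi(A)$ for the system and $\overline{P}_{j,k}=\sum_{A\subseteq C_j,|A|=n_j-k}q^{C_j}(A)\chi_j(A)$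 for module $j$. *)

theory Defs
  imports Complex_Main "HOL-Library.FuncSet"
begin

text \<open>Subsets of a component set S are identified with Boolean vectors.
  A structure on S is a function from subsets of S to bool (working/failed).\<close>

definition semicoherent :: "'a set \<Rightarrow> ('a set \<Rightarrow> bool) \<Rightarrow> bool" where
  "semicoherent S f \<longleftrightarrow>
     (\<forall>A B. A \<subseteq> B \<and> B \<subseteq> S \<and> f A \<longrightarrow> f B) \<and> \<not> f {} \<and> f S"

definition tail_sig :: "'a set \<Rightarrow> ('a set \<Rightarrow> real) \<Rightarrow> ('a set \<Rightarrow> bool) \<Rightarrow> nat \<Rightarrow> real" where
  "tail_sig S q f k = (\<Sum>A\<in>{A. A \<subseteq> S \<and> card A = card S - k}. q A * of_bool (f A))"

end

theory Submission
  imports Defs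
begin

lemma count_lemma:
  fixes I :: "'i set" and C :: "'i \<Rightarrow> 'a set" and P :: "'i \<Rightarrow> 'a set \<Rightarrow> bool"
  assumes fI: "finite I" and fC: "\<And>i. i \<in> I \<Longrightarrow> finite (C i)"
    and disj: "\<And>i j. i \<in> I \<Longrightarrow> j \<in> I \<Longrightarrow> i \<noteq> j \<Longrightarrow> C i \<inter> C j = {}"
  shows "card {A. A \<subseteq> (\<Union>i\<in>I. C i) \<and> card A = k \<and> (\<forall>i\<in>I. P i (A \<inter> C i))}
    = (\<Sum>a\<in>{a \<in> (\<Pi>\<^sub>E i\<in>I. {0..card (C i)}). sum a I = k}.
         \<Prod>i\<in>I. card {B. B \<subseteq> C i \<and> card B = a i \<and> P i B})"
proof -
  define X where "X = {A. A \<subseteq> (\<Union>i\<in>I. C i) \<and> card A = k \<and> (\<forall>i\<in>I. P i (A \<inter> C i))}"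
  define Idx where "Idx = {a \<in> (\<Pi>\<^sub>E i\<in>I. {0..card (C i)}). sum a I = k}"
  define G where "G a i = {B. B \<subseteq> C i \<and> card B = a i \<and> P i B}" for a i
  define g where "g A = restrict (\<lambda>i. A \<inter> C i) I" for A
  have fU: "finite (\<Union>i\<in>I. C i)" using fI fC by auto
  have cardA: "card A = (\<Sum>i\<in>I. card (A \<inter> C i))" if "A \<subseteq> (\<Union>i\<in>I. C i)" for A
  proof -
    have "A = (\<Union>i\<in>I. A \<inter> C i)" using that by auto
    hence "card A = card (\<Union>i\<in>I. A \<inter> C i)" by simp
    also have "\<dots> = (\<Sum>i\<in>I. card (A \<inter> C i))"
      by (rule card_UN_disjoint) (use fI fC disj in auto)
    finally show ?thesis .
  qed
  have bij: "bij_betw g X (\<Union>a\<in>Idx. (\<Pi>\<^sub>E i\<in>I. G a i))"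
  proof (rule bij_betw_imageI)
    show "inj_on g X"
    proof (rule inj_onI)
      fix A B assume A: "A \<in> X" and B: "B \<in> X" and e: "g A = g B"
      have "A = (\<Union>i\<in>I. g A i)" using A unfolding X_def g_def by auto
      also have "\<dots> = (\<Union>i\<in>I. g B i)" using e by simp
      also have "\<dots> = B" using B unfolding X_def g_def by auto
      finally show "A = B" .
    qed
    show "g ` X = (\<Union>a\<in>Idx. (\<Pi>\<^sub>E i\<in>I. G a i))"
    proof
      show "g ` X \<subseteq> (\<Union>a\<in>Idx. (\<Pi>\<^sub>E i\<in>I. G a i))"
      proof
        fix f assume "f \<in> g ` X"
        then obtain A where A: "A \<in> X" and f: "f = g A" by auto
        define a where "a = restrict (\<lambda>i. card (A \<inter> C i)) I"
        have "a \<in> Idx"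
        proof -
          have "a \<in> (\<Pi>\<^sub>E i\<in>I. {0..card (C i)})"
            unfolding a_def using fC by (auto intro!: card_mono)
          moreover have "sum a I = k" using A cardA unfolding X_def a_def by auto
          ultimately show ?thesis unfolding Idx_def by auto
        qed
        moreover have "f \<in> (\<Pi>\<^sub>E i\<in>I. G a i)"
          using A unfolding f g_def G_def a_def X_def by auto
        ultimately show "f \<in> (\<Union>a\<in>Idx. (\<Pi>\<^sub>E i\<in>I. G a i))" by auto
      qed
    next
      show "(\<Union>a\<in>Idx. (\<Pi>\<^sub>E i\<in>I. G a i)) \<subseteq> g ` X"
      proof
        fix f assume "f \<in> (\<Union>a\<in>Idx. (\<Pi>\<^sub>E i\<in>I. G a i))"
        then obtain a where a: "a \<in> Idx" and f: "f \<in> (\<Pi>\<^sub>E i\<in>I. G a i)" by auto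
        define A where "A = (\<Union>i\<in>I. f i)"
        have sub: "f i \<subseteq> C i" if "i \<in> I" for i using f that unfolding G_def by auto
        have int: "A \<inter> C i = f i" if "i \<in> I" for i
          using sub disj that unfolding A_def by blast
        have AU: "A \<subseteq> (\<Union>i\<in>I. C i)" using sub unfolding A_def by auto
        have "card A = (\<Sum>i\<in>I. card (f i))" using cardA[OF AU] int by simp
        also have "\<dots> = (\<Sum>i\<in>I. a i)" using f unfolding G_def by (auto intro: sum.cong)
        also have "\<dots> = k" using a unfolding Idx_def by auto
        finally have "card A = k" .
        hence "A \<in> X" using AU int f unfolding X_def G_def by auto
        moreover have "g A = f" using f int unfolding g_def
          by (auto simp: PiE_def extensional_def restrict_def fun_eq_iff)
        ultimately show "f \<in> g ` X" by blast
      qed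
    qed
  qed
  have "card X = card (\<Union>a\<in>Idx. (\<Pi>\<^sub>E i\<in>I. G a i))" using bij by (rule bij_betw_same_card)
  also have "\<dots> = (\<Sum>a\<in>Idx. card (\<Pi>\<^sub>E i\<in>I. G a i))"
  proof (rule card_UN_disjoint)
    show "finite Idx" unfolding Idx_def using fI by (auto intro: finite_subset[OF _ finite_PiE[of I "\<lambda>i. {0..card (C i)}"]])
    show "\<forall>a\<in>Idx. finite (\<Pi>\<^sub>E i\<in>I. G a i)" using fI fC unfolding G_def
      by (auto intro!: finite_PiE)
    show "\<forall>a\<in>Idx. \<forall>b\<in>Idx. a \<noteq> b \<longrightarrow> (\<Pi>\<^sub>E i\<in>I. G a i) \<inter> (\<Pi>\<^sub>E i\<in>I. G b i) = {}"
    proof (intro ballI impI)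
      fix a b assume a: "a \<in> Idx" and b: "b \<in> Idx" and ne: "a \<noteq> b"
      show "(\<Pi>\<^sub>E i\<in>I. G a i) \<inter> (\<Pi>\<^sub>E i\<in>I. G b i) = {}"
      proof (rule ccontr)
        assume "\<not> ?thesis"
        then obtain f where f1: "f \<in> (\<Pi>\<^sub>E i\<in>I. G a i)" and f2: "f \<in> (\<Pi>\<^sub>E i\<in>I. G b i)" by blast
        have "a i = b i" for i
        proof (cases "i \<in> I")
          case True then show ?thesis using PiE_mem[OF f1 True] PiE_mem[OF f2 True] by (simp add: G_def)
        next
          case False then show ?thesis using a b unfolding Idx_def by (auto simp: PiE_def extensional_def)
        qed
        with ne show False by auto
      qed
    qed
  qed
  also have "\<dots> = (\<Sum>a\<in>Idx. \<Prod>i\<in>I. card (G a i))" by (simp add: card_PiE fI)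
  finally show ?thesis unfolding X_def Idx_def G_def .
qed

lemma tail_lemma:
  assumes fS: "finite S" and m: "m \<le> card S"
    and qs: "\<And>A. A \<subseteq> S \<Longrightarrow> q A = 1 / real (card S choose card A)"
  shows "tail_sig S q f (card S - m) = real (card {A. A \<subseteq> S \<and> card A = m \<and> f A}) / real (card S choose m)"
proof -
  have e: "card S - (card S - m) = m" using m by simp
  have "tail_sig S q f (card S - m) = (\<Sum>A\<in>{A. A \<subseteq> S \<and> card A = m}. 1 / real (card S choose m) * of_bool (f A))"
    unfolding tail_sig_def e by (rule sum.cong) (auto simp: qs)
  also have "\<dots> = 1 / real (card S choose m) * (\<Sum>A\<in>{A. A \<subseteq> S \<and> card A = m}. of_bool (f A))"
    by (simp add: sum_distrib_left)
  also have "(\<Sum>A\<in>{A. A \<subseteq> S \<and> card A = m}. of_bool (f A) :: real) = real (card ({A. A \<subseteq> S \<and> card A = m} \<inter> {A. f A}))"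
    by (rule sum_of_bool_eq) (use fS in auto)
  also have "{A. A \<subseteq> S \<and> card A = m} \<inter> {A. f A} = {A. A \<subseteq> S \<and> card A = m \<and> f A}" by auto
  finally show ?thesis by simp
qed


theorem mainTheorem9:
  fixes n r :: nat
    and C :: "nat \<Rightarrow> nat set"
    and q :: "nat set \<Rightarrow> real"
    and qC :: "nat \<Rightarrow> nat set \<Rightarrow> real"
    and chi :: "nat \<Rightarrow> nat set \<Rightarrow> bool"
    and phi :: "nat set \<Rightarrow> bool"
    and k :: nat
  assumes blocks_nonempty: "\<And>j. j \<in> {1..r} \<Longrightarrow> C j \<noteq> {}"
    and blocks_disjoint: "\<And>i j. i \<in> {1..r} \<Longrightarrow> j \<in> {1..r} \<Longrightarrow> i \<noteq> j \<Longrightarrow> C i \<inter> C j = {}"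
    and blocks_cover: "(\<Union>j\<in>{1..r}. C j) = {1..n}"
    and q_sym: "\<And>A. A \<subseteq> {1..n} \<Longrightarrow> q A = 1 / real (n choose card A)"
    and qC_sym: "\<And>j A. j \<in> {1..r} \<Longrightarrow> A \<subseteq> C j \<Longrightarrow> qC j A = 1 / real (card (C j) choose card A)"
    and chi_semicoherent: "\<And>j. j \<in> {1..r} \<Longrightarrow> semicoherent (C j) (chi j)"
    and series: "\<And>A. A \<subseteq> {1..n} \<Longrightarrow> phi A = (\<forall>j\<in>{1..r}. chi j (A \<inter> C j))"
    and k_le: "k \<le> n"
  shows "tail_sig {1..n} q phi (n - k) =
    (\<Sum>a\<in>{a \<in> (\<Pi>\<^sub>E j\<in>{1..r}. {0..card (C j)}). (\<Sum>j=1..r. a j) = k}.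
       (\<Prod>j=1..r. real (card (C j) choose a j)) / real (n choose k)
       * (\<Prod>j=1..r. tail_sig (C j) (qC j) (chi j) (card (C j) - a j)))"
  proof -
  let ?I = "{1..r::nat}"
  have CU: "C j \<subseteq> {1..n}" if "j \<in> ?I" for j using blocks_cover that by auto
  have fC: "finite (C j)" if "j \<in> ?I" for j using CU[OF that] finite_subset by blast
  define N where "N j m = card {B. B \<subseteq> C j \<and> card B = m \<and> chi j B}" for j m
  have L: "tail_sig {1..n} q phi (n - k) = real (card {A. A \<subseteq> {1..n} \<and> card A = k \<and> phi A}) / real (n choose k)"
    using tail_lemma[of "{1..n}" k q phi] k_le q_sym by simp
  have setEq: "{A. A \<subseteq> {1..n} \<and> card A = k \<and> phi A}
     = {A. A \<subseteq> (\<Union>i\<in>?I. C i) \<and> card A = k \<and> (\<forall>i\<in>?I. chi i (A \<inter> C i))}"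
    using series blocks_cover by auto
  have cnt: "card {A. A \<subseteq> {1..n} \<and> card A = k \<and> phi A}
     = (\<Sum>a\<in>{a \<in> (\<Pi>\<^sub>E j\<in>?I. {0..card (C j)}). (\<Sum>j=1..r. a j) = k}. \<Prod>j=1..r. N j (a j))"
    unfolding setEq N_def by (rule count_lemma) (use fC blocks_disjoint in auto)
  have trm: "(\<Prod>j=1..r. real (card (C j) choose a j)) / real (n choose k)
       * (\<Prod>j=1..r. tail_sig (C j) (qC j) (chi j) (card (C j) - a j))
     = real (\<Prod>j=1..r. N j (a j)) / real (n choose k)"
    if a: "a \<in> {a \<in> (\<Pi>\<^sub>E j\<in>?I. {0..card (C j)}). (\<Sum>j=1..r. a j) = k}" for a
  proof -
    have aj: "a j \<le> card (C j)" if "j \<in> ?I" for j using a that by (auto simp: PiE_def Pi_def)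
    have ts: "tail_sig (C j) (qC j) (chi j) (card (C j) - a j) = real (N j (a j)) / real (card (C j) choose a j)"
      if "j \<in> ?I" for j unfolding N_def
      by (rule tail_lemma) (use fC[OF that] aj[OF that] qC_sym[OF that] in auto)
    have "(\<Prod>j=1..r. real (card (C j) choose a j)) * (\<Prod>j=1..r. tail_sig (C j) (qC j) (chi j) (card (C j) - a j))
       = (\<Prod>j=1..r. real (card (C j) choose a j) * tail_sig (C j) (qC j) (chi j) (card (C j) - a j))"
      by (simp add: prod.distrib)
    also have "\<dots> = (\<Prod>j=1..r. real (N j (a j)))"
    proof (rule prod.cong)
      fix j assume j: "j \<in> ?I"
      have "(card (C j) choose a j) > 0" using aj[OF j] by simp
      then show "real (card (C j) choose a j) * tail_sig (C j) (qC j) (chi j) (card (C j) - a j) = real (N j (a j))"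
        using ts[OF j] by simp
    qed simp
    finally show ?thesis by (simp add: of_nat_prod)
  qed
  show ?thesis
    unfolding L cnt of_nat_sum sum_divide_distrib
    by (rule sum.cong[OF refl], rule sym, rule trm, assumption)
qed

end
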